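(* Let $U$ be a nonempty subset of $\mathbb{Q}[[t]]$ and let $\mathbf{g}=(g_i(t))_{i=0}^\infty$ be any sequence of elements of $U$ (repetitions allowed). Then for each $n\ge1$, $$\sum_{k=1}^n\alpha_k(U,\mathbf{g})\ge\sum_{k=1}^n\alpha_k(U),$$ where $\alpha_k(U,\mathbf{g}):=\sum_{j=0}^{k-1}\operatorname{ord}_t(g_k(t)-g_j(t))$. Moreover, given a fixed $N\ge1$, equality holds for all $0\le n\le N$ whenever $(g_i(t))_{i=0}^N$ is the initial part of a $t$-ordering of $U$.
   Context: $\mathbb{Q}[[t]]$ is the ring of formal power series over $\mathbb{Q}$, and $\operatorname{ord}_t(f)$ is the largest $\alpha\in\mathbb{N}$ with $t^\alpha\mid f$, $\operatorname{ord}_t(0)=+\infty$. For nonempty $U\subseteq\mathbb{Q}[[t]]$, a $t$-ordering of $U$ is a sequence $(f_i(t))_{i\ge0}$ of elements of $U$ where $f_0\in U$ is arbitrary and for each $k\ge1$, $f_k$ minimizes $\sum_{j=0}^{k-1}\operatorname{ord}_t(f_k(t)-f_j(t))$ over elements of $U$. The $t$-exponent sequence of $U$ is $\alpha_k(U):=\sum_{j=0}^{k-1}\operatorname{ord}_t(f_k(t)-f_j(t))$ for any $t$-ordering of $U$; this value does not depend on the choice of $t$-ordering. *)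

theory Defs
  imports "HOL-Computational_Algebra.Formal_Power_Series" "HOL-Library.Extended_Nat"
begin

definition ordt :: "rat fps \<Rightarrow> enat" where
  "ordt f = (if f = 0 then \<infinity> else enat (subdegree f))"

definition alpha_seq :: "(nat \<Rightarrow> rat fps) \<Rightarrow> nat \<Rightarrow> enat" where
  "alpha_seq g k = (\<Sum>j<k. ordt (g k - g j))"

definition t_ordering :: "rat fps set \<Rightarrow> (nat \<Rightarrow> rat fps) \<Rightarrow> bool" where
  "t_ordering U f \<longleftrightarrow> (\<forall>i. f i \<in> U) \<and>
     (\<forall>k\<ge>1. \<forall>h\<in>U. (\<Sum>j<k. ordt (f k - f j)) \<le> (\<Sum>j<k. ordt (h - f j)))"

definition t_exponent :: "rat fps set \<Rightarrow> nat \<Rightarrow> enat" where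
  "t_exponent U k = alpha_seq (SOME f. t_ordering U f) k"

end

theory Submission imports Defs begin

definition agree :: "nat \<Rightarrow> rat fps \<Rightarrow> rat fps \<Rightarrow> bool" where
  "agree m x y \<longleftrightarrow> (\<forall>i<m. fps_nth x i = fps_nth y i)"

lemma agree_mono: "agree m x y \<Longrightarrow> m' \<le> m \<Longrightarrow> agree m' x y"
  unfolding agree_def by auto

lemma agree_sym: "agree m x y \<Longrightarrow> agree m y x"
  unfolding agree_def by auto

lemma agree_trans: "agree m x y \<Longrightarrow> agree m y z \<Longrightarrow> agree m x z"
  unfolding agree_def by auto

lemma agree_Suc: "agree (Suc m) x y \<longleftrightarrow> agree m x y \<and> fps_nth x m = fps_nth y m"
  unfolding agree_def using less_Suc_eq by auto

lemma agree_iff_subdegree: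
  assumes "x \<noteq> y"
  shows "agree m x y \<longleftrightarrow> m \<le> subdegree (x - y)"
proof
  assume "agree m x y"
  then show "m \<le> subdegree (x - y)"
    using assms by (intro subdegree_geI) (auto simp: agree_def)
next
  assume "m \<le> subdegree (x - y)"
  then show "agree m x y" unfolding agree_def
  proof (intro allI impI)
    fix i assume "i < m"
    then have "fps_nth (x - y) i = 0" using \<open>m \<le> subdegree (x - y)\<close> nth_less_subdegree_zero[of i "x - y"] by simp
    then show "fps_nth x i = fps_nth y i" by simp
  qed
qed

lemma subdegree_as_sum:
  assumes "x \<noteq> y" "\<not> agree M x y"
  shows "subdegree (x - y) = (\<Sum>m=1..M. if agree m x y then 1 else 0)"
proof -
  have lt: "subdegree (x - y) < M" using assms agree_iff_subdegree by force
  have "(\<Sum>m=1..M. if agree m x y then 1 else (0::nat)) = card ({1..M} \<inter> {m. agree m x y})"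
    by (simp add: sum.If_cases)
  also have "{1..M} \<inter> {m. agree m x y} = {1..subdegree (x - y)}"
    using lt assms(1) by (auto simp: agree_iff_subdegree)
  finally show ?thesis by simp
qed


lemma sum_indicator_card:
  "finite A \<Longrightarrow> (\<Sum>x\<in>A. if P x then 1 else 0 :: nat) = card {x\<in>A. P x}"
  by (simp add: sum.If_cases Int_def)

lemma enat_sum: "enat (sum f A) = (\<Sum>x\<in>A. enat (f x))"
  by (metis (mono_tags, lifting) of_nat_eq_enat of_nat_sum sum.cong)

lemma descent:
  fixes S :: "rat fps set" and F :: "rat fps list"
  assumes fin: "finite S" and len: "length F < card S"
  shows "\<exists>s\<in>S. \<forall>m'\<le>m. card {j\<in>{..<length F}. agree m' (F!j) s} < card {x\<in>S. agree m' x s}"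
proof (induction m)
  case 0
  have "S \<noteq> {}" using len by auto
  then obtain s where "s \<in> S" by auto
  moreover have "\<And>x y. agree 0 x y" by (simp add: agree_def)
  ultimately show ?case using len by auto
next
  case (Suc m)
  then obtain s where s: "s \<in> S" and H: "\<forall>m'\<le>m. card {j\<in>{..<length F}. agree m' (F!j) s} < card {x\<in>S. agree m' x s}"
    by blast
  define B where "B = {x\<in>S. agree m x s}"
  define G where "G = {j\<in>{..<length F}. agree m (F!j) s}"
  have lt: "card G < card B" using H unfolding B_def G_def by auto
  define C where "C = (\<lambda>x. fps_nth x m) ` B"
  have finB: "finite B" using fin unfolding B_def by auto
  have finC: "finite C" using finB unfolding C_def by auto
  have finG: "finite G" unfolding G_def by auto
  have cB: "(\<Sum>c\<in>C. card {x\<in>B. fps_nth x m = c}) = card B"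
    using sum.group[of B C "\<lambda>x. fps_nth x m" "\<lambda>_. 1::nat"] finB finC unfolding C_def by auto
  define G' where "G' = {j\<in>G. fps_nth (F!j) m \<in> C}"
  have finG': "finite G'" using finG unfolding G'_def by auto
  have "(\<Sum>c\<in>C. card {j\<in>G'. fps_nth (F!j) m = c}) = card G'"
    using sum.group[of G' C "\<lambda>j. fps_nth (F!j) m" "\<lambda>_. 1::nat"] finG' finC unfolding G'_def by auto
  moreover have "\<And>c. c \<in> C \<Longrightarrow> {j\<in>G'. fps_nth (F!j) m = c} = {j\<in>G. fps_nth (F!j) m = c}"
    unfolding G'_def by auto
  ultimately have "(\<Sum>c\<in>C. card {j\<in>G. fps_nth (F!j) m = c}) = card G'"
    by (metis (no_types, lifting) sum.cong)
  also have "card G' \<le> card G" using finG unfolding G'_def by (intro card_mono) auto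
  finally have cG: "(\<Sum>c\<in>C. card {j\<in>G. fps_nth (F!j) m = c}) \<le> card G" .
  obtain c where cC: "c \<in> C" and clt: "card {j\<in>G. fps_nth (F!j) m = c} < card {x\<in>B. fps_nth x m = c}"
  proof (rule ccontr)
    assume "\<not> thesis"
    then have "\<forall>c\<in>C. card {x\<in>B. fps_nth x m = c} \<le> card {j\<in>G. fps_nth (F!j) m = c}"
      using that by force
    then have "(\<Sum>c\<in>C. card {x\<in>B. fps_nth x m = c}) \<le> (\<Sum>c\<in>C. card {j\<in>G. fps_nth (F!j) m = c})"
      by (intro sum_mono) auto
    then show False using cB cG lt by linarith
  qed
  then obtain s' where s'B: "s' \<in> B" and s'c: "fps_nth s' m = c" unfolding C_def by auto
  have s'S: "s' \<in> S" and as': "agree m s' s" using s'B unfolding B_def by auto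
  have "\<forall>m'\<le>Suc m. card {j\<in>{..<length F}. agree m' (F!j) s'} < card {x\<in>S. agree m' x s'}"
  proof (intro allI impI)
    fix m' assume m': "m' \<le> Suc m"
    show "card {j\<in>{..<length F}. agree m' (F!j) s'} < card {x\<in>S. agree m' x s'}"
    proof (cases "m' = Suc m")
      case True
      have e1: "{x\<in>S. agree m' x s'} = {x\<in>B. fps_nth x m = c}"
        unfolding True B_def agree_Suc using as' s'c
        by (auto intro: agree_trans dest: agree_sym)
      have e2: "{j\<in>{..<length F}. agree m' (F!j) s'} = {j\<in>G. fps_nth (F!j) m = c}"
        unfolding True G_def agree_Suc using as' s'c
        by (auto intro: agree_trans dest: agree_sym)
      show ?thesis using clt e1 e2 by simp
    next
      case False
      then have mm: "m' \<le> m" using m' by simp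
      then have a': "agree m' s' s" using as' agree_mono by blast
      have "\<And>z. agree m' z s' \<longleftrightarrow> agree m' z s"
        using a' by (auto intro: agree_trans dest: agree_sym)
      then show ?thesis using H mm by simp
    qed
  qed
  then show ?case using s'S by blast
qed

lemma key:
  fixes S :: "rat fps set" and F :: "rat fps list"
  assumes fin: "finite S" and len: "length F < card S"
  shows "\<exists>s\<in>S. (\<Sum>j<length F. ordt (s - F!j)) \<le> enat (\<Sum>x\<in>S-{s}. subdegree (s - x))"
proof -
  define M where "M = Suc (Max ((\<lambda>(x,y). subdegree (x - y)) ` (S \<times> S)))"
  have sep: "\<not> agree M x y" if "x \<in> S" "y \<in> S" "x \<noteq> y" for x y
  proof -
    have "subdegree (x - y) \<le> Max ((\<lambda>(x,y). subdegree (x - y)) ` (S \<times> S))"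
      using that fin by (intro Max_ge) auto
    then show ?thesis using agree_iff_subdegree[OF that(3)] unfolding M_def by simp
  qed
  obtain s where sS: "s \<in> S" and H: "\<forall>m'\<le>M. card {j\<in>{..<length F}. agree m' (F!j) s} < card {x\<in>S. agree m' x s}"
    using descent[OF fin len, of M] by blast
  have arefl: "agree m z z" for m z by (simp add: agree_def)
  have "{x\<in>S. agree M x s} = {s}" using sep sS arefl by auto
  then have "card {j\<in>{..<length F}. agree M (F!j) s} < 1" using H by auto
  then have "{j\<in>{..<length F}. agree M (F!j) s} = {}" by (simp add: card_eq_0_iff)
  then have nF: "\<And>j. j < length F \<Longrightarrow> \<not> agree M (F!j) s" by auto
  have Fne: "F!j \<noteq> s" if "j < length F" for j using nF[OF that] arefl by metis
  have "(\<Sum>j<length F. ordt (s - F!j)) = (\<Sum>j<length F. enat (\<Sum>m=1..M. if agree m (F!j) s then 1 else 0))"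
  proof (intro sum.cong refl)
    fix j assume "j \<in> {..<length F}"
    then have j: "j < length F" by simp
    have "ordt (s - F!j) = enat (subdegree (F!j - s))"
      using Fne[OF j] unfolding ordt_def by (simp add: subdegree_minus_commute)
    then show "ordt (s - F!j) = enat (\<Sum>m=1..M. if agree m (F!j) s then 1 else 0)"
      using subdegree_as_sum[OF Fne[OF j] nF[OF j]] by simp
  qed
  also have "\<dots> = enat (\<Sum>j<length F. \<Sum>m=1..M. if agree m (F!j) s then 1 else 0)"
    by (simp add: enat_sum)
  also have "(\<Sum>j<length F. \<Sum>m=1..M. if agree m (F!j) s then 1 else 0) = (\<Sum>m=1..M. \<Sum>j<length F. if agree m (F!j) s then 1 else (0::nat))"
    by (rule sum.swap)
  also have "\<dots> = (\<Sum>m=1..M. card {j\<in>{..<length F}. agree m (F!j) s})"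
    by (simp add: sum_indicator_card)
  also have "\<dots> \<le> (\<Sum>m=1..M. card {x\<in>S-{s}. agree m x s})"
  proof (intro sum_mono)
    fix m assume "m \<in> {1..M}"
    then have lt: "card {j\<in>{..<length F}. agree m (F!j) s} < card {x\<in>S. agree m x s}" using H by auto
    have "{x\<in>S-{s}. agree m x s} = {x\<in>S. agree m x s} - {s}" by auto
    moreover have "s \<in> {x\<in>S. agree m x s}" using sS arefl by auto
    moreover have "finite {x\<in>S. agree m x s}" using fin by auto
    ultimately have "card {x\<in>S-{s}. agree m x s} = card {x\<in>S. agree m x s} - 1" by simp
    then show "card {j\<in>{..<length F}. agree m (F!j) s} \<le> card {x\<in>S-{s}. agree m x s}" using lt by linarith
  qed
  also have "\<dots> = (\<Sum>m=1..M. \<Sum>x\<in>S-{s}. if agree m x s then 1 else (0::nat))"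
    using fin by (simp add: sum_indicator_card)
  also have "\<dots> = (\<Sum>x\<in>S-{s}. \<Sum>m=1..M. if agree m x s then 1 else (0::nat))"
    by (rule sum.swap)
  also have "\<dots> = (\<Sum>x\<in>S-{s}. subdegree (s - x))"
  proof (intro sum.cong refl)
    fix x assume x: "x \<in> S - {s}"
    then have "\<not> agree M x s" using sep sS by auto
    then show "(\<Sum>m=1..M. if agree m x s then 1 else 0) = subdegree (s - x)"
      using subdegree_as_sum[of x s M] x by (simp add: subdegree_minus_commute)
  qed
  finally show ?thesis using sS by auto
qed


definition DD :: "rat fps set \<Rightarrow> nat" where
  "DD S = (\<Sum>x\<in>S. \<Sum>y\<in>S-{x}. subdegree (x - y))"

lemma DD_remove:
  assumes fin: "finite S" and sS: "s \<in> S"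
  shows "DD S = DD (S - {s}) + 2 * (\<Sum>y\<in>S-{s}. subdegree (s - y))"
proof -
  define R where "R = S - {s}"
  have finR: "finite R" using fin unfolding R_def by auto
  have "DD S = (\<Sum>y\<in>R. subdegree (s - y)) + (\<Sum>x\<in>R. \<Sum>y\<in>S-{x}. subdegree (x - y))"
    unfolding DD_def R_def using sum.remove[OF fin sS, of "\<lambda>x. \<Sum>y\<in>S-{x}. subdegree (x - y)"] by simp
  also have "(\<Sum>x\<in>R. \<Sum>y\<in>S-{x}. subdegree (x - y)) = (\<Sum>x\<in>R. subdegree (s - x) + (\<Sum>y\<in>R-{x}. subdegree (x - y)))"
  proof (intro sum.cong refl)
    fix x assume x: "x \<in> R"
    have "S - {x} = insert s (R - {x})" using x sS unfolding R_def by auto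
    moreover have "s \<notin> R - {x}" unfolding R_def by auto
    ultimately show "(\<Sum>y\<in>S-{x}. subdegree (x - y)) = subdegree (s - x) + (\<Sum>y\<in>R-{x}. subdegree (x - y))"
      using finR by (simp add: subdegree_minus_commute)
  qed
  also have "\<dots> = (\<Sum>x\<in>R. subdegree (s - x)) + DD R"
    unfolding DD_def by (simp add: sum.distrib)
  finally show ?thesis unfolding R_def by simp
qed

lemma enat_two_cancel: "2 * (a::enat) \<le> 2 * b \<Longrightarrow> a \<le> b"
  by (cases a; cases b) (auto simp: numeral_eq_enat)

lemma set_bound:
  assumes tord: "t_ordering U f"
  shows "finite S \<Longrightarrow> S \<subseteq> U \<Longrightarrow> card S = Suc n \<Longrightarrow> 2 * (\<Sum>k=1..n. alpha_seq f k) \<le> enat (DD S)"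
proof (induction n arbitrary: S)
  case 0
  then show ?case by simp
next
  case (Suc n)
  define F where "F = map f [0..<Suc n]"
  have lenF: "length F < card S" using Suc.prems unfolding F_def by simp
  obtain s where sS: "s \<in> S" and sk: "(\<Sum>j<length F. ordt (s - F!j)) \<le> enat (\<Sum>x\<in>S-{s}. subdegree (s - x))"
    using key[OF Suc.prems(1) lenF] by blast
  have "(\<Sum>j<length F. ordt (s - F!j)) = (\<Sum>j<Suc n. ordt (s - f j))"
    unfolding F_def by (intro sum.cong) (auto simp del: upt_Suc)
  moreover have "alpha_seq f (Suc n) \<le> (\<Sum>j<Suc n. ordt (s - f j))"
  proof -
    have "Suc n \<ge> 1" by simp
    moreover have "s \<in> U" using sS Suc.prems(2) by auto
    ultimately show ?thesis using tord unfolding t_ordering_def alpha_seq_def by blast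
  qed
  ultimately have al: "alpha_seq f (Suc n) \<le> enat (\<Sum>x\<in>S-{s}. subdegree (s - x))"
    using sk by simp
  have IH: "2 * (\<Sum>k=1..n. alpha_seq f k) \<le> enat (DD (S - {s}))"
    using Suc.IH[of "S - {s}"] Suc.prems sS by auto
  have "2 * (\<Sum>k=1..Suc n. alpha_seq f k) = 2 * (\<Sum>k=1..n. alpha_seq f k) + 2 * alpha_seq f (Suc n)"
    by (simp add: distrib_left)
  also have "\<dots> \<le> enat (DD (S - {s})) + 2 * enat (\<Sum>x\<in>S-{s}. subdegree (s - x))"
    using IH al by (intro add_mono mult_left_mono) auto
  also have "\<dots> = enat (DD S)"
    using DD_remove[OF Suc.prems(1) sS] by (simp add: numeral_eq_enat)
  finally show ?case .
qed

lemma two_tri: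
  fixes a :: "nat \<Rightarrow> nat \<Rightarrow> nat"
  assumes sym: "\<And>i j. a i j = a j i"
  shows "2 * (\<Sum>k\<le>n. \<Sum>j<k. a k j) = (\<Sum>k\<le>n. \<Sum>j\<in>{..n}-{k}. a k j)"
proof (induction n)
  case 0
  then show ?case by simp
next
  case (Suc n)
  have s1: "(\<Sum>k\<le>Suc n. \<Sum>j\<in>{..Suc n}-{k}. a k j) = (\<Sum>k\<le>n. \<Sum>j\<in>{..Suc n}-{k}. a k j) + (\<Sum>j\<in>{..Suc n}-{Suc n}. a (Suc n) j)"
    by (rule sum.atMost_Suc)
  have s2: "(\<Sum>k\<le>n. \<Sum>j\<in>{..Suc n}-{k}. a k j) = (\<Sum>k\<le>n. a (Suc n) k + (\<Sum>j\<in>{..n}-{k}. a k j))"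
  proof (intro sum.cong refl)
    fix k assume "k \<in> {..n}"
    then have "{..Suc n}-{k} = insert (Suc n) ({..n}-{k})" by auto
    then show "(\<Sum>j\<in>{..Suc n}-{k}. a k j) = a (Suc n) k + (\<Sum>j\<in>{..n}-{k}. a k j)" by (simp add: sym)
  qed
  have s3: "{..Suc n}-{Suc n} = {..<Suc n}" by auto
  have s4: "(\<Sum>k\<le>n. a (Suc n) k) = (\<Sum>j<Suc n. a (Suc n) j)"
    by (simp only: lessThan_Suc_atMost)
  have R: "(\<Sum>k\<le>Suc n. \<Sum>j\<in>{..Suc n}-{k}. a k j) = (\<Sum>k\<le>n. \<Sum>j\<in>{..n}-{k}. a k j) + 2 * (\<Sum>j<Suc n. a (Suc n) j)"
    unfolding s1 s2 s3 sum.distrib s4 by simp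
  have L: "2 * (\<Sum>k\<le>Suc n. \<Sum>j<k. a k j) = 2 * (\<Sum>k\<le>n. \<Sum>j<k. a k j) + 2 * (\<Sum>j<Suc n. a (Suc n) j)"
    by (simp only: sum.atMost_Suc distrib_left)
  show ?case unfolding L R Suc.IH ..
qed

lemma sum_1_atMost: "h 0 = (0::'a::comm_monoid_add) \<Longrightarrow> (\<Sum>k=1..n. h k) = (\<Sum>k\<le>(n::nat). h k)"
  by (induction n) (simp_all add: sum.atMost_Suc)

lemma main_ineq:
  assumes tord: "t_ordering U f" and gU: "\<forall>i. g i \<in> U"
  shows "(\<Sum>k=1..n. alpha_seq f k) \<le> (\<Sum>k=1..n. alpha_seq g k)"
proof (cases "inj_on g {..n}")
  case False
  then obtain i j where ij: "i \<le> n" "j \<le> n" "i < j" "g i = g j"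
  proof -
    obtain i j where "i \<le> n" "j \<le> n" "i \<noteq> j" "g i = g j"
      using False unfolding inj_on_def by auto
    then show ?thesis using that[of i j] that[of j i] by (cases "i < j") auto
  qed
  have "ordt (g j - g i) = \<infinity>" using ij by (simp add: ordt_def)
  moreover have "ordt (g j - g i) \<le> alpha_seq g j"
    unfolding alpha_seq_def using ij by (intro member_le_sum) auto
  ultimately have "\<infinity> \<le> alpha_seq g j" by simp
  also have "alpha_seq g j \<le> (\<Sum>k=1..n. alpha_seq g k)"
    using ij by (intro member_le_sum) auto
  finally show ?thesis by simp
next
  case True
  define S where "S = g ` {..n}"
  have cS: "card S = Suc n" unfolding S_def using card_image[OF True] by simp
  have SU: "S \<subseteq> U" unfolding S_def using gU by auto
  have bound: "2 * (\<Sum>k=1..n. alpha_seq f k) \<le> enat (DD S)"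
    using set_bound[OF tord, of S n] cS SU unfolding S_def by auto
  have "(\<Sum>k=1..n. alpha_seq g k) = (\<Sum>k\<le>n. alpha_seq g k)"
    by (rule sum_1_atMost) (simp add: alpha_seq_def)
  also have "\<dots> = (\<Sum>k\<le>n. enat (\<Sum>j<k. subdegree (g k - g j)))"
  proof (intro sum.cong refl)
    fix k assume k: "k \<in> {..n}"
    have "\<And>j. j < k \<Longrightarrow> ordt (g k - g j) = enat (subdegree (g k - g j))"
    proof -
      fix j assume "j < k"
      then have "g k \<noteq> g j" using True k inj_onD[OF True, of k j] by auto
      then show "ordt (g k - g j) = enat (subdegree (g k - g j))" unfolding ordt_def by simp
    qed
    then show "alpha_seq g k = enat (\<Sum>j<k. subdegree (g k - g j))"
      unfolding alpha_seq_def enat_sum by simp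
  qed
  also have "\<dots> = enat (\<Sum>k\<le>n. \<Sum>j<k. subdegree (g k - g j))" by (simp add: enat_sum)
  finally have T: "(\<Sum>k=1..n. alpha_seq g k) = enat (\<Sum>k\<le>n. \<Sum>j<k. subdegree (g k - g j))" .
  have "2 * (\<Sum>k\<le>n. \<Sum>j<k. subdegree (g k - g j)) = (\<Sum>k\<le>n. \<Sum>j\<in>{..n}-{k}. subdegree (g k - g j))"
    by (rule two_tri) (simp add: subdegree_minus_commute)
  also have "\<dots> = DD S"
  proof -
    have "DD S = (\<Sum>k\<le>n. \<Sum>y\<in>S-{g k}. subdegree (g k - y))"
      unfolding DD_def S_def by (simp add: sum.reindex[OF True])
    also have "\<dots> = (\<Sum>k\<le>n. \<Sum>j\<in>{..n}-{k}. subdegree (g k - g j))"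
    proof (intro sum.cong refl)
      fix k assume k: "k \<in> {..n}"
      have e: "S - {g k} = g ` ({..n} - {k})"
        unfolding S_def using True k by (auto simp: inj_on_def)
      have "inj_on g ({..n} - {k})" using True by (rule inj_on_subset) auto
      then show "(\<Sum>y\<in>S-{g k}. subdegree (g k - y)) = (\<Sum>j\<in>{..n}-{k}. subdegree (g k - g j))"
        unfolding e by (simp add: sum.reindex)
    qed
    finally show ?thesis by simp
  qed
  finally have "2 * (\<Sum>k=1..n. alpha_seq g k) = enat (DD S)"
    unfolding T by (simp add: numeral_eq_enat)
  then show ?thesis using bound enat_two_cancel by metis
qed


definition cost :: "rat fps list \<Rightarrow> rat fps \<Rightarrow> enat" where
  "cost L h = sum_list (map (\<lambda>x. ordt (h - x)) L)"

definition pick :: "rat fps set \<Rightarrow> rat fps list \<Rightarrow> rat fps" where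
  "pick U L = (SOME h. h \<in> U \<and> (\<forall>h'\<in>U. cost L h \<le> cost L h'))"

primrec pref :: "rat fps set \<Rightarrow> nat \<Rightarrow> rat fps list" where
  "pref U 0 = []"
| "pref U (Suc k) = pref U k @ [pick U (pref U k)]"

definition tord :: "rat fps set \<Rightarrow> nat \<Rightarrow> rat fps" where
  "tord U k = pick U (pref U k)"

lemma pick_spec:
  assumes "U \<noteq> {}"
  shows "pick U L \<in> U \<and> (\<forall>h'\<in>U. cost L (pick U L) \<le> cost L h')"
proof -
  obtain h0 where h0: "h0 \<in> U" using assms by auto
  define v where "v = (LEAST v. \<exists>h\<in>U. v = cost L h)"
  have "\<exists>h\<in>U. v = cost L h" unfolding v_def by (rule LeastI_ex) (use h0 in auto)
  then obtain h where h: "h \<in> U" "v = cost L h" by blast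
  have vle: "v \<le> cost L h'" if "h' \<in> U" for h'
    unfolding v_def by (rule Least_le) (use that in blast)
  have "\<forall>h'\<in>U. cost L h \<le> cost L h'"
    using h vle by auto
  then have "\<exists>h. h \<in> U \<and> (\<forall>h'\<in>U. cost L h \<le> cost L h')" using h by blast
  then show ?thesis unfolding pick_def by (rule someI_ex)
qed

lemma pref_eq: "pref U k = map (tord U) [0..<k]"
  by (induction k) (simp_all add: tord_def)

lemma exists_t_ordering:
  assumes "U \<noteq> {}"
  shows "t_ordering U (tord U)"
  unfolding t_ordering_def
proof (intro conjI allI impI ballI)
  fix i show "tord U i \<in> U" unfolding tord_def using pick_spec[OF assms] by blast
next
  fix k :: nat and h assume "1 \<le> k" "h \<in> U"
  have c: "cost (pref U k) x = (\<Sum>j<k. ordt (x - tord U j))" for x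
    unfolding cost_def pref_eq by (simp add: sum_list_map_eq_sum_count2 interv_sum_list_conv_sum_set_nat lessThan_atLeast0 comp_def)
  show "(\<Sum>j<k. ordt (tord U k - tord U j)) \<le> (\<Sum>j<k. ordt (h - tord U j))"
  proof -
    have "cost (pref U k) (tord U k) \<le> cost (pref U k) h"
      using pick_spec[OF assms, of "pref U k"] \<open>h \<in> U\<close> unfolding tord_def by blast
    then show ?thesis unfolding c .
  qed
qed

theorem theorem4p10:
  fixes U :: "rat fps set" and g :: "nat \<Rightarrow> rat fps"
  assumes "U \<noteq> {}" and "\<forall>i. g i \<in> U"
  shows "(\<forall>n\<ge>1. (\<Sum>k=1..n. alpha_seq g k) \<ge> (\<Sum>k=1..n. t_exponent U k))
    \<and> (\<forall>N\<ge>1. (\<exists>f. t_ordering U f \<and> (\<forall>i\<le>N. g i = f i)) \<longrightarrow>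
          (\<forall>n\<le>N. (\<Sum>k=1..n. alpha_seq g k) = (\<Sum>k=1..n. t_exponent U k)))"
proof -
  define f0 where "f0 = (SOME f. t_ordering U f)"
  have f0: "t_ordering U f0"
    unfolding f0_def by (rule someI[of "t_ordering U" "tord U"]) (rule exists_t_ordering[OF assms(1)])
  have te: "t_exponent U k = alpha_seq f0 k" for k
    unfolding t_exponent_def f0_def ..
  have P1: "\<forall>n\<ge>1. (\<Sum>k=1..n. alpha_seq g k) \<ge> (\<Sum>k=1..n. t_exponent U k)"
    unfolding te using main_ineq[OF f0 assms(2)] by blast
  have P2: "(\<Sum>k=1..n. alpha_seq g k) = (\<Sum>k=1..n. t_exponent U k)"
    if "t_ordering U f" "\<forall>i\<le>N. g i = f i" "n \<le> N" for N f n
  proof -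
    have "(\<Sum>k=1..n. alpha_seq g k) = (\<Sum>k=1..n. alpha_seq f k)"
    proof (intro sum.cong refl)
      fix k assume "k \<in> {1..n}"
      then have "k \<le> N" using that(3) by simp
      then show "alpha_seq g k = alpha_seq f k"
        unfolding alpha_seq_def using that(2) by (intro sum.cong) auto
    qed
    moreover have fU: "\<forall>i. f i \<in> U" using that(1) unfolding t_ordering_def by blast
    have "(\<Sum>k=1..n. alpha_seq f k) = (\<Sum>k=1..n. alpha_seq f0 k)"
    proof -
      have f0U: "\<forall>i. f0 i \<in> U" using f0 unfolding t_ordering_def by blast
      show ?thesis using main_ineq[OF f0 fU, of n] main_ineq[OF that(1) f0U, of n] by (rule antisym[rotated])
    qed
    ultimately show ?thesis unfolding te by simp
  qed
  show ?thesis using P1 P2 by blast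
qed

end
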